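(* Let $G$ be a finite group and $\chi\in\mathrm{Irr}(G)$. Then $\chi$ is linear (i.e. $\chi(1)=1$) if and only if $[Z(\chi),G]=G'$.
   Context: $\mathrm{Irr}(G)$ is the set of complex irreducible characters of $G$. For a character $\chi$, $Z(\chi)=\{g\in G: |\chi(g)|=\chi(1)\}$. *)

theory Defs
  imports "HOL-Algebra.Generated_Groups" "Jordan_Normal_Form.Matrix"
begin

definition is_rep :: "('a, 'b) monoid_scheme \<Rightarrow> nat \<Rightarrow> ('a \<Rightarrow> complex mat) \<Rightarrow> bool" where
  "is_rep G n \<rho> \<longleftrightarrow> n \<ge> 1 \<and>
     (\<forall>g \<in> carrier G. \<rho> g \<in> carrier_mat n n) \<and>
     \<rho> \<one>\<^bsub>G\<^esub> = 1\<^sub>m n \<and>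
     (\<forall>g \<in> carrier G. \<forall>h \<in> carrier G. \<rho> (g \<otimes>\<^bsub>G\<^esub> h) = \<rho> g * \<rho> h)"

definition invariant_subspace :: "('a, 'b) monoid_scheme \<Rightarrow> nat \<Rightarrow> ('a \<Rightarrow> complex mat) \<Rightarrow> complex vec set \<Rightarrow> bool" where
  "invariant_subspace G n \<rho> W \<longleftrightarrow> W \<subseteq> carrier_vec n \<and> 0\<^sub>v n \<in> W \<and>
     (\<forall>v \<in> W. \<forall>w \<in> W. v + w \<in> W) \<and>
     (\<forall>c. \<forall>v \<in> W. c \<cdot>\<^sub>v v \<in> W) \<and>
     (\<forall>g \<in> carrier G. \<forall>v \<in> W. \<rho> g *\<^sub>v v \<in> W)"

definition irreducible_rep :: "('a, 'b) monoid_scheme \<Rightarrow> nat \<Rightarrow> ('a \<Rightarrow> complex mat) \<Rightarrow> bool" where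
  "irreducible_rep G n \<rho> \<longleftrightarrow> is_rep G n \<rho> \<and>
     (\<forall>W. invariant_subspace G n \<rho> W \<longrightarrow> W = {0\<^sub>v n} \<or> W = carrier_vec n)"

definition mat_trace :: "complex mat \<Rightarrow> complex" where
  "mat_trace A = (\<Sum>i<dim_row A. A $$ (i, i))"

definition character_of :: "('a, 'b) monoid_scheme \<Rightarrow> ('a \<Rightarrow> complex mat) \<Rightarrow> 'a \<Rightarrow> complex" where
  "character_of G \<rho> = (\<lambda>g. if g \<in> carrier G then mat_trace (\<rho> g) else 0)"

definition Irr :: "('a, 'b) monoid_scheme \<Rightarrow> ('a \<Rightarrow> complex) set" where
  "Irr G = {\<chi>. \<exists>n \<rho>. irreducible_rep G n \<rho> \<and> \<chi> = character_of G \<rho>}"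

definition char_center :: "('a, 'b) monoid_scheme \<Rightarrow> ('a \<Rightarrow> complex) \<Rightarrow> 'a set" where
  "char_center G \<chi> = {g \<in> carrier G. complex_of_real (cmod (\<chi> g)) = \<chi> \<one>\<^bsub>G\<^esub>}"

definition commutator_subgroup :: "('a, 'b) monoid_scheme \<Rightarrow> 'a set \<Rightarrow> 'a set \<Rightarrow> 'a set" where
  "commutator_subgroup G A B = generate G
     {a \<otimes>\<^bsub>G\<^esub> b \<otimes>\<^bsub>G\<^esub> inv\<^bsub>G\<^esub> a \<otimes>\<^bsub>G\<^esub> inv\<^bsub>G\<^esub> b | a b. a \<in> A \<and> b \<in> B}"

end

theory Submission
  imports Defs "HOL-Algebra.Multiplicative_Group" "Jordan_Normal_Form.Jordan_Normal_Form_Existence"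
begin

lemma four_block_diag_pow:
  assumes B: "B \<in> carrier_mat k k" and D: "D \<in> carrier_mat l l"
  shows "four_block_mat B (0\<^sub>m k l) (0\<^sub>m l k) D ^\<^sub>m m =
         four_block_mat (B ^\<^sub>m m) (0\<^sub>m k l) (0\<^sub>m l k) (D ^\<^sub>m m)"
proof (induction m)
  case 0
  show ?case using B D by simp
next
  case (Suc m)
  have Bm: "B ^\<^sub>m m \<in> carrier_mat k k" and Dm: "D ^\<^sub>m m \<in> carrier_mat l l" using B D by auto
  have "four_block_mat B (0\<^sub>m k l) (0\<^sub>m l k) D ^\<^sub>m Suc m =
     four_block_mat (B ^\<^sub>m m) (0\<^sub>m k l) (0\<^sub>m l k) (D ^\<^sub>m m) * four_block_mat B (0\<^sub>m k l) (0\<^sub>m l k) D"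
    using Suc by simp
  also have "\<dots> = four_block_mat (B ^\<^sub>m m * B) (0\<^sub>m k l) (0\<^sub>m l k) (D ^\<^sub>m m * D)"
    by (subst mult_four_block_mat[OF Bm zero_carrier_mat zero_carrier_mat Dm B zero_carrier_mat zero_carrier_mat D]) (use B D Bm Dm in auto)
  finally show ?case by simp
qed

lemma four_block_inj:
  assumes "four_block_mat A B C D = four_block_mat A' B' C' D'"
    and "A \<in> carrier_mat k k" "A' \<in> carrier_mat k k" "D \<in> carrier_mat l l" "D' \<in> carrier_mat l l"
    and "B \<in> carrier_mat k l" "B' \<in> carrier_mat k l" "C \<in> carrier_mat l k" "C' \<in> carrier_mat l k"
  shows "A = A' \<and> D = D'"
proof
  show "A = A'"
  proof (rule eq_matI)
    fix i j assume ij: "i < dim_row A'" "j < dim_col A'"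
    have "four_block_mat A B C D $$ (i,j) = four_block_mat A' B' C' D' $$ (i,j)" using assms(1) by simp
    then show "A $$ (i,j) = A' $$ (i,j)" using ij assms(2-9) by simp
  qed (use assms in auto)
  show "D = D'"
  proof (rule eq_matI)
    fix i j assume ij: "i < dim_row D'" "j < dim_col D'"
    have "four_block_mat A B C D $$ (i+k,j+k) = four_block_mat A' B' C' D' $$ (i+k,j+k)" using assms(1) by simp
    then show "D $$ (i,j) = D' $$ (i,j)" using ij assms(2-9) by simp
  qed (use assms in auto)
qed

lemma jb_pow_one:
  assumes m: "m > 0" and eq: "(jordan_block k (a::complex)) ^\<^sub>m m = 1\<^sub>m k"
  shows "k \<le> 1 \<and> (k = 1 \<longrightarrow> a ^ m = 1)"
proof -
  have ent: "\<And>i j. i < k \<Longrightarrow> j < k \<Longrightarrow>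
     (if i \<le> j then of_nat (m choose (j - i)) * a ^ (m + i - j) else 0) = (if i = j then 1 else (0::complex))"
  proof -
    fix i j assume "i < k" "j < k"
    have "(jordan_block k a ^\<^sub>m m) $$ (i,j) = 1\<^sub>m k $$ (i,j)" using eq by simp
    then show "?thesis i j" unfolding jordan_block_pow using \<open>i < k\<close> \<open>j < k\<close> by simp
  qed
  show ?thesis
  proof (cases "k \<ge> 1")
    case True
    from ent[of 0 0] True have am: "a ^ m = 1" by simp
    have "a \<noteq> 0"
    proof
      assume "a = 0"
      hence "a ^ m = 0" using m by simp
      with am show False by simp
    qed
    have "k \<le> 1"
    proof (rule ccontr)
      assume "\<not> k \<le> 1"
      from ent[of 0 1] this have "of_nat m * a ^ (m - 1) = (0::complex)" by simp
      with \<open>a \<noteq> 0\<close> m show False by simp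
    qed
    with am show ?thesis by simp
  qed simp
qed

lemma jm_pow_one:
  assumes m: "m > 0"
  shows "jordan_matrix n_as ^\<^sub>m m = 1\<^sub>m (sum_list (map fst n_as)) \<Longrightarrow>
    \<exists>d. jordan_matrix n_as = mat (sum_list (map fst n_as)) (sum_list (map fst n_as))
          (\<lambda>(i,j). if i = j then d i else 0) \<and> (\<forall>i < sum_list (map fst n_as). (d i :: complex) ^ m = 1)"
proof (induction n_as)
  case Nil
  show ?case by (intro exI[of _ "\<lambda>_. 1"], auto intro!: eq_matI)
next
  case (Cons ka rest)
  obtain k a where ka: "ka = (k,a)" by force
  let ?l = "sum_list (map fst rest)"
  let ?J = "jordan_matrix rest"
  have J: "?J \<in> carrier_mat ?l ?l" by simp
  have B: "jordan_block k a \<in> carrier_mat k k" by simp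
  have "four_block_mat (jordan_block k a ^\<^sub>m m) (0\<^sub>m k ?l) (0\<^sub>m ?l k) (?J ^\<^sub>m m)
     = four_block_mat (1\<^sub>m k) (0\<^sub>m k ?l) (0\<^sub>m ?l k) (1\<^sub>m ?l)"
    using Cons.prems unfolding ka jordan_matrix_Cons four_block_diag_pow[OF B J] by simp
  from four_block_inj[OF this, where k=k and l="?l"] J B
  have e1: "jordan_block k a ^\<^sub>m m = 1\<^sub>m k" and e2: "?J ^\<^sub>m m = 1\<^sub>m ?l" by auto
  from jb_pow_one[OF m e1] have k1: "k \<le> 1" and ak: "k = 1 \<Longrightarrow> a ^ m = 1" by auto
  from Cons.IH[OF e2] obtain d where d: "?J = mat ?l ?l (\<lambda>(i,j). if i = j then d i else 0)"
    and dm: "\<forall>i < ?l. d i ^ m = 1" by blast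
  define d' where "d' = (\<lambda>i. if i < k then a else d (i - k))"
  show ?case
  proof (intro exI[of _ d'] conjI)
    show "\<forall>i<sum_list (map fst (ka # rest)). d' i ^ m = 1"
      using dm ak k1 unfolding d'_def ka by auto
    show "jordan_matrix (ka # rest) = mat (sum_list (map fst (ka # rest))) (sum_list (map fst (ka # rest)))
          (\<lambda>(i,j). if i = j then d' i else 0)"
    proof (rule eq_matI)
      fix i j assume ij: "i < dim_row (mat (sum_list (map fst (ka # rest))) (sum_list (map fst (ka # rest)))
          (\<lambda>(i,j). if i = j then d' i else (0::complex)))"
        "j < dim_col (mat (sum_list (map fst (ka # rest))) (sum_list (map fst (ka # rest)))
          (\<lambda>(i,j). if i = j then d' i else (0::complex)))"
      hence ij': "i < k + ?l" "j < k + ?l" unfolding ka by auto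
      show "jordan_matrix (ka # rest) $$ (i, j) = mat (sum_list (map fst (ka # rest))) (sum_list (map fst (ka # rest)))
          (\<lambda>(i,j). if i = j then d' i else 0) $$ (i, j)"
        unfolding ka jordan_matrix_Cons using ij' k1
        by (subst index_mat_four_block, auto simp: d d'_def)
    qed auto
  qed
qed

lemma triangle_eq:
  fixes z :: "nat \<Rightarrow> complex"
  assumes z1: "\<And>i. i < n \<Longrightarrow> cmod (z i) = 1" and s: "cmod (\<Sum>i<n. z i) = real n"
    and i: "i < n"
  shows "z i = of_nat n / cnj (\<Sum>i<n. z i)"
proof -
  define S where "S = (\<Sum>i<n. z i)"
  have n0: "n > 0" using i by simp
  have sS: "cmod S = real n" using s unfolding S_def .
  have le: "\<And>j. j < n \<Longrightarrow> Re (cnj S * z j) \<le> real n"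
  proof -
    fix j assume j: "j < n"
    have "Re (cnj S * z j) \<le> cmod (cnj S * z j)" by (rule complex_Re_le_cmod)
    also have "\<dots> = real n" using z1[OF j] sS by (simp add: norm_mult)
    finally show "Re (cnj S * z j) \<le> real n" .
  qed
  have sumRe: "(\<Sum>j<n. Re (cnj S * z j)) = real n * real n"
  proof -
    have "(\<Sum>j<n. Re (cnj S * z j)) = Re (\<Sum>j<n. cnj S * z j)" by (simp add: Re_sum)
    also have "(\<Sum>j<n. cnj S * z j) = cnj S * S" by (simp add: S_def sum_distrib_left)
    also have "Re (cnj S * S) = (cmod S)^2" by (simp add: complex_norm_square[symmetric] mult.commute)
    finally show ?thesis using sS by (simp add: power2_eq_square)
  qed
  have eq: "Re (cnj S * z i) = real n"
  proof (rule ccontr)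
    assume "Re (cnj S * z i) \<noteq> real n"
    with le[OF i] have lt: "Re (cnj S * z i) < real n" by simp
    have "(\<Sum>j<n. Re (cnj S * z j)) < (\<Sum>j<n. real n)"
      by (rule sum_strict_mono_ex1) (use le lt i in auto)
    with sumRe show False by simp
  qed
  have nm: "cmod (cnj S * z i) = real n" using z1[OF i] sS by (simp add: norm_mult)
  have "Im (cnj S * z i) = 0"
  proof -
    have "(cmod (cnj S * z i))^2 = (Re (cnj S * z i))^2 + (Im (cnj S * z i))^2"
      by (simp add: cmod_power2)
    with nm eq show ?thesis by simp
  qed
  with eq have ce: "cnj S * z i = of_nat n" by (simp add: complex_eq_iff)
  have "S \<noteq> 0" using sS n0 by auto
  hence "cnj S \<noteq> 0" by simp
  with ce have "z i = of_nat n / cnj S" by (simp add: field_simps)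
  thus ?thesis unfolding S_def .
qed

lemma trace_comm:
  assumes A: "A \<in> carrier_mat n k" and B: "B \<in> carrier_mat k n"
  shows "mat_trace (A * B) = mat_trace (B * A)"
proof -
  have "mat_trace (A * B) = (\<Sum>i<n. \<Sum>j<k. A $$ (i,j) * B $$ (j,i))"
    unfolding mat_trace_def using A B by (auto simp: scalar_prod_def atLeast0LessThan intro!: sum.cong)
  also have "\<dots> = (\<Sum>j<k. \<Sum>i<n. B $$ (j,i) * A $$ (i,j))"
    by (subst sum.swap) (simp add: mult.commute)
  also have "\<dots> = mat_trace (B * A)"
    unfolding mat_trace_def using A B by (auto simp: scalar_prod_def atLeast0LessThan intro!: sum.cong)
  finally show ?thesis .
qed

lemma scalar_of_finite_order:
  fixes A :: "complex mat"
  assumes A: "A \<in> carrier_mat n n" and m: "m > 0" and Am: "A ^\<^sub>m m = 1\<^sub>m n"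
    and tr: "cmod (mat_trace A) = real n"
  shows "\<exists>c. A = c \<cdot>\<^sub>m 1\<^sub>m n"
proof -
  from char_poly_factorized[OF A] obtain as where "char_poly A = (\<Prod>a\<leftarrow>as. [:- a, 1:])" by auto
  from jordan_nf_exists[OF A this] obtain n_as where "jordan_nf A n_as" ..
  hence "similar_mat A (jordan_matrix n_as)" unfolding jordan_nf_def by auto
  then obtain P Q where wit: "similar_mat_wit A (jordan_matrix n_as) P Q" unfolding similar_mat_def by auto
  note w = similar_mat_witD2[OF A wit]
  let ?J = "jordan_matrix n_as"
  have J: "?J \<in> carrier_mat n n" using w by auto
  hence N: "sum_list (map fst n_as) = n" by (metis carrier_matD(1) jordan_matrix_dim(1))
  have "?J ^\<^sub>m m = Q * A ^\<^sub>m m * P" by (rule similar_mat_wit_pow_id[OF similar_mat_wit_sym[OF wit]])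
  also have "\<dots> = Q * P" using w Am by simp
  also have "\<dots> = 1\<^sub>m n" using w by simp
  finally have Jm: "?J ^\<^sub>m m = 1\<^sub>m (sum_list (map fst n_as))" using N by simp
  from jm_pow_one[OF m Jm] N obtain d where d: "?J = mat n n (\<lambda>(i,j). if i = j then d i else 0)"
    and dm: "\<forall>i<n. d i ^ m = 1" by auto
  have d1: "\<And>i. i < n \<Longrightarrow> cmod (d i) = 1" using dm power_eq_1_iff m by blast
  have "mat_trace A = mat_trace (P * (?J * Q))" using w by (simp add: assoc_mult_mat[of P n n ?J n Q n])
  also have "\<dots> = mat_trace ((?J * Q) * P)" using w by (intro trace_comm[of _ n n]) auto
  also have "\<dots> = mat_trace (?J * (Q * P))" using w by (simp add: assoc_mult_mat[of ?J n n Q n P n])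
  also have "\<dots> = mat_trace ?J" using w by (simp add: right_mult_one_mat[of ?J n n])
  also have "\<dots> = (\<Sum>i<n. d i)" unfolding mat_trace_def d by simp
  finally have trd: "mat_trace A = (\<Sum>i<n. d i)" .
  define c where "c = of_nat n / cnj (\<Sum>i<n. d i)"
  have dc: "\<And>i. i < n \<Longrightarrow> d i = c" unfolding c_def
    by (rule triangle_eq[OF d1]) (use tr trd in auto)
  have Jc: "?J = c \<cdot>\<^sub>m 1\<^sub>m n" unfolding d by (rule eq_matI) (auto simp: dc)
  have "A = P * ?J * Q" using w by simp
  also have "\<dots> = c \<cdot>\<^sub>m (P * Q)"
  proof -
    have "P * (c \<cdot>\<^sub>m 1\<^sub>m n) = c \<cdot>\<^sub>m (P * 1\<^sub>m n)" by (rule mult_smult_distrib) (use w in auto)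
    also have "\<dots> = c \<cdot>\<^sub>m P" using w by (simp add: right_mult_one_mat)
    finally have "P * (c \<cdot>\<^sub>m 1\<^sub>m n) * Q = (c \<cdot>\<^sub>m P) * Q" by simp
    also have "\<dots> = c \<cdot>\<^sub>m (P * Q)" by (rule mult_smult_assoc_mat) (use w in auto)
    finally show ?thesis unfolding Jc .
  qed
  also have "\<dots> = c \<cdot>\<^sub>m 1\<^sub>m n" using w by simp
  finally show ?thesis by blast
qed

lemma commuting_irrep_dim1:
  assumes irr: "irreducible_rep G n \<rho>"
    and comm: "\<And>g h. g \<in> carrier G \<Longrightarrow> h \<in> carrier G \<Longrightarrow> \<rho> g * \<rho> h = \<rho> h * \<rho> g"
  shows "n = 1"
proof -
  have rep: "is_rep G n \<rho>" and irrW: "\<And>W. invariant_subspace G n \<rho> W \<Longrightarrow> W = {0\<^sub>v n} \<or> W = carrier_vec n"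
    using irr unfolding irreducible_rep_def by auto
  have n1: "n \<ge> 1" and car: "\<And>g. g \<in> carrier G \<Longrightarrow> \<rho> g \<in> carrier_mat n n"
    using rep unfolding is_rep_def by auto
  have scal: "\<exists>l. \<forall>v\<in>carrier_vec n. \<rho> h *\<^sub>v v = l \<cdot>\<^sub>v v" if h: "h \<in> carrier G" for h
  proof -
    have Ah: "\<rho> h \<in> carrier_mat n n" using car h .
    from degree_monic_char_poly[OF Ah] n1 have "degree (char_poly (\<rho> h)) \<noteq> 0" by auto
    hence "\<not> constant (poly (char_poly (\<rho> h)))" by (simp add: constant_degree)
    from fundamental_theorem_of_algebra[OF this] obtain l where "poly (char_poly (\<rho> h)) l = 0" by auto
    hence "eigenvalue (\<rho> h) l" using eigenvalue_root_char_poly[OF Ah] by simp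
    then obtain v where v: "v \<in> carrier_vec n" "v \<noteq> 0\<^sub>v n" "\<rho> h *\<^sub>v v = l \<cdot>\<^sub>v v"
      unfolding eigenvalue_def eigenvector_def using Ah by auto
    define W where "W = {v \<in> carrier_vec n. \<rho> h *\<^sub>v v = l \<cdot>\<^sub>v v}"
    have "invariant_subspace G n \<rho> W"
      unfolding invariant_subspace_def
    proof (intro conjI ballI allI)
      show "W \<subseteq> carrier_vec n" unfolding W_def by auto
      show "0\<^sub>v n \<in> W" unfolding W_def using Ah by (auto intro!: eq_vecI)
      fix v w assume "v \<in> W" "w \<in> W"
      then show "v + w \<in> W" unfolding W_def using Ah
        by (auto simp: mult_add_distrib_mat_vec[OF Ah] smult_add_distrib_vec[of _ n])
    next
      fix c v assume "v \<in> W"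
      then show "c \<cdot>\<^sub>v v \<in> W" unfolding W_def using Ah
        by (auto simp: mult_mat_vec[OF Ah] smult_smult_assoc mult.commute)
    next
      fix g v assume g: "g \<in> carrier G" and "v \<in> W"
      hence vc: "v \<in> carrier_vec n" and hv: "\<rho> h *\<^sub>v v = l \<cdot>\<^sub>v v" unfolding W_def by auto
      have Ag: "\<rho> g \<in> carrier_mat n n" using car g .
      have "\<rho> h *\<^sub>v (\<rho> g *\<^sub>v v) = (\<rho> h * \<rho> g) *\<^sub>v v" using Ag Ah vc by simp
      also have "\<dots> = (\<rho> g * \<rho> h) *\<^sub>v v" using comm[OF g h] by simp
      also have "\<dots> = \<rho> g *\<^sub>v (l \<cdot>\<^sub>v v)" using Ag Ah vc hv by simp
      also have "\<dots> = l \<cdot>\<^sub>v (\<rho> g *\<^sub>v v)" using mult_mat_vec[OF Ag vc] .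
      finally show "\<rho> g *\<^sub>v v \<in> W" unfolding W_def using Ag vc by auto
    qed
    from irrW[OF this] have "W = carrier_vec n"
      using v unfolding W_def by auto
    thus ?thesis unfolding W_def by auto
  qed
  define e where "e = (unit_vec n 0 :: complex vec)"
  define W0 where "W0 = {c \<cdot>\<^sub>v e | c. True}"
  have "invariant_subspace G n \<rho> W0"
    unfolding invariant_subspace_def
  proof (intro conjI ballI allI)
    show "W0 \<subseteq> carrier_vec n" unfolding W0_def e_def by auto
    have "0\<^sub>v n = 0 \<cdot>\<^sub>v e" unfolding e_def by (auto intro!: eq_vecI)
    thus "0\<^sub>v n \<in> W0" unfolding W0_def by auto
    fix v w assume "v \<in> W0" "w \<in> W0"
    then obtain a b where "v = a \<cdot>\<^sub>v e" "w = b \<cdot>\<^sub>v e" unfolding W0_def by auto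
    hence "v + w = (a + b) \<cdot>\<^sub>v e" by (simp add: add_smult_distrib_vec)
    thus "v + w \<in> W0" unfolding W0_def by auto
  next
    fix c v assume "v \<in> W0"
    then obtain a where "v = a \<cdot>\<^sub>v e" unfolding W0_def by auto
    hence "c \<cdot>\<^sub>v v = (c * a) \<cdot>\<^sub>v e" by (simp add: smult_smult_assoc)
    thus "c \<cdot>\<^sub>v v \<in> W0" unfolding W0_def by auto
  next
    fix g v assume g: "g \<in> carrier G" and "v \<in> W0"
    then obtain a where va: "v = a \<cdot>\<^sub>v e" unfolding W0_def by auto
    from scal[OF g] obtain l where l: "\<forall>v\<in>carrier_vec n. \<rho> g *\<^sub>v v = l \<cdot>\<^sub>v v" by auto
    have "\<rho> g *\<^sub>v v = l \<cdot>\<^sub>v v" using l va unfolding e_def by auto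
    also have "\<dots> = (l * a) \<cdot>\<^sub>v e" using va by (simp add: smult_smult_assoc)
    finally show "\<rho> g *\<^sub>v v \<in> W0" unfolding W0_def by auto
  qed
  moreover have "W0 \<noteq> {0\<^sub>v n}"
  proof
    assume "W0 = {0\<^sub>v n}"
    moreover have "1 \<cdot>\<^sub>v e \<in> W0" unfolding W0_def by blast
    ultimately have "1 \<cdot>\<^sub>v e = 0\<^sub>v n" by auto
    hence "(1 \<cdot>\<^sub>v e) $ 0 = (0\<^sub>v n :: complex vec) $ 0" by simp
    thus False using n1 unfolding e_def by simp
  qed
  ultimately have W0: "W0 = carrier_vec n" using irrW by blast
  show "n = 1"
  proof (rule ccontr)
    assume "n \<noteq> 1"
    with n1 have n2: "1 < n" by simp
    have "unit_vec n 1 \<in> W0" using W0 by simp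
    then obtain c where "unit_vec n 1 = c \<cdot>\<^sub>v e" unfolding W0_def by auto
    hence "unit_vec n 1 $ 1 = (c \<cdot>\<^sub>v e) $ 1" by simp
    thus False using n2 unfolding e_def by simp
  qed
qed

lemma rep_pow:
  assumes G: "group G" and rep: "is_rep G n \<rho>" and g: "g \<in> carrier G"
  shows "\<rho> (g [^]\<^bsub>G\<^esub> (k::nat)) = \<rho> g ^\<^sub>m k"
proof (induction k)
  case 0
  have "\<rho> g \<in> carrier_mat n n" using rep g unfolding is_rep_def by auto
  then show ?case using rep unfolding is_rep_def by simp
next
  case (Suc k)
  have "g [^]\<^bsub>G\<^esub> Suc k = g [^]\<^bsub>G\<^esub> k \<otimes>\<^bsub>G\<^esub> g" using G g by (simp add: group.is_monoid monoid.nat_pow_Suc)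
  moreover have "g [^]\<^bsub>G\<^esub> k \<in> carrier G" using G g by (simp add: group.is_monoid monoid.nat_pow_closed)
  ultimately show ?case using Suc rep g unfolding is_rep_def by simp
qed

lemma rep_eq_imp:
  assumes G: "group G" and rep: "is_rep G n \<rho>" and x: "x \<in> carrier G" and y: "y \<in> carrier G"
    and e: "\<rho> x = \<rho> y"
  shows "\<rho> (x \<otimes>\<^bsub>G\<^esub> inv\<^bsub>G\<^esub> y) = 1\<^sub>m n"
proof -
  have iy: "inv\<^bsub>G\<^esub> y \<in> carrier G" using G y by (simp add: group.inv_closed)
  have "\<rho> (x \<otimes>\<^bsub>G\<^esub> inv\<^bsub>G\<^esub> y) = \<rho> y * \<rho> (inv\<^bsub>G\<^esub> y)" using rep x iy e unfolding is_rep_def by simp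
  also have "\<dots> = \<rho> (y \<otimes>\<^bsub>G\<^esub> inv\<^bsub>G\<^esub> y)" using rep y iy unfolding is_rep_def by simp
  also have "\<dots> = 1\<^sub>m n" using rep G y by (simp add: group.r_inv is_rep_def)
  finally show ?thesis .
qed

lemma rep_one_imp:
  assumes G: "group G" and rep: "is_rep G n \<rho>" and x: "x \<in> carrier G" and y: "y \<in> carrier G"
    and e: "\<rho> (x \<otimes>\<^bsub>G\<^esub> inv\<^bsub>G\<^esub> y) = 1\<^sub>m n"
  shows "\<rho> x = \<rho> y"
proof -
  have iy: "inv\<^bsub>G\<^esub> y \<in> carrier G" using G y by (simp add: group.inv_closed)
  have xi: "x \<otimes>\<^bsub>G\<^esub> inv\<^bsub>G\<^esub> y \<in> carrier G" using G x iy by (simp add: group.is_monoid monoid.m_closed)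
  have "x = (x \<otimes>\<^bsub>G\<^esub> inv\<^bsub>G\<^esub> y) \<otimes>\<^bsub>G\<^esub> y" using G x y iy
    by (simp add: group.is_monoid monoid.m_assoc group.l_inv monoid.r_one)
  hence "\<rho> x = \<rho> (x \<otimes>\<^bsub>G\<^esub> inv\<^bsub>G\<^esub> y) * \<rho> y" using rep xi y unfolding is_rep_def by metis
  also have "\<dots> = \<rho> y" using e rep y unfolding is_rep_def by (auto intro: left_mult_one_mat)
  finally show ?thesis .
qed

lemma finite_group_pow_one:
  assumes G: "group G" and fin: "finite (carrier G)" and g: "g \<in> carrier G"
  shows "\<exists>m>0. g [^]\<^bsub>G\<^esub> (m::nat) = \<one>\<^bsub>G\<^esub>"
proof -
  have "Coset.order G > 0" using G fin by (simp add: group.is_monoid monoid.order_gt_0_iff_finite)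
  moreover have "g [^]\<^bsub>G\<^esub> Coset.order G = \<one>\<^bsub>G\<^esub>" by (rule group.pow_order_eq_1[OF G g])
  ultimately show ?thesis by blast
qed

lemma one_by_one:
  fixes A :: "complex mat"
  assumes A: "A \<in> carrier_mat 1 1"
  shows "A ^\<^sub>m k = mat 1 1 (\<lambda>_. (A $$ (0,0)) ^ k)"
proof (induction k)
  case 0
  show ?case using A by (auto intro!: eq_matI)
next
  case (Suc k)
  show ?case using A Suc by (auto intro!: eq_matI simp: scalar_prod_def)
qed

theorem mainTheorem9:
  fixes G :: "('a, 'b) monoid_scheme" and \<chi> :: "'a \<Rightarrow> complex"
  assumes "group G" and "finite (carrier G)" and "\<chi> \<in> Irr G"
  shows "\<chi> \<one>\<^bsub>G\<^esub> = 1 \<longleftrightarrow>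
         commutator_subgroup G (char_center G \<chi>) (carrier G) = derived G (carrier G)"
proof -
  note G = assms(1) and fin = assms(2)
  interpret group G by (rule G)
  from assms(3) obtain n \<rho> where irr: "irreducible_rep G n \<rho>" and chi: "\<chi> = character_of G \<rho>"
    unfolding Irr_def by auto
  have rep: "is_rep G n \<rho>" using irr unfolding irreducible_rep_def by auto
  have n1: "n \<ge> 1" and car: "\<And>g. g \<in> carrier G \<Longrightarrow> \<rho> g \<in> carrier_mat n n" and r1: "\<rho> \<one>\<^bsub>G\<^esub> = 1\<^sub>m n"
    and rm: "\<And>g h. g \<in> carrier G \<Longrightarrow> h \<in> carrier G \<Longrightarrow> \<rho> (g \<otimes>\<^bsub>G\<^esub> h) = \<rho> g * \<rho> h"
    using rep unfolding is_rep_def by auto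
  have chi1: "\<chi> \<one>\<^bsub>G\<^esub> = of_nat n" unfolding chi character_of_def mat_trace_def using r1 by simp
  have cc: "char_center G \<chi> = {g \<in> carrier G. cmod (mat_trace (\<rho> g)) = real n}"
  proof -
    have "\<And>x. (complex_of_real x = of_nat n) = (x = real n)"
      by (metis of_real_eq_iff of_real_of_nat_eq)
    thus ?thesis unfolding char_center_def chi1 unfolding chi character_of_def by auto
  qed
  have comm_all: "commutator_subgroup G (carrier G) (carrier G) = derived G (carrier G)"
    unfolding commutator_subgroup_def derived_def by (rule arg_cong[where f="generate G"]) blast
  show ?thesis
  proof
    assume "\<chi> \<one>\<^bsub>G\<^esub> = 1"
    hence n: "n = 1" using chi1 by simp
    have "char_center G \<chi> = carrier G"
    proof -
      have "cmod (mat_trace (\<rho> g)) = real n" if g: "g \<in> carrier G" for g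
      proof -
        obtain m :: nat where m: "m > 0" "g [^]\<^bsub>G\<^esub> m = \<one>\<^bsub>G\<^esub>" using finite_group_pow_one[OF G fin g] by auto
        have A: "\<rho> g \<in> carrier_mat 1 1" using car[OF g] n by simp
        have "\<rho> g ^\<^sub>m m = 1\<^sub>m 1" using rep_pow[OF G rep g, of m] m r1 n by simp
        hence "mat 1 1 (\<lambda>_. (\<rho> g $$ (0,0))^m) = 1\<^sub>m 1" using one_by_one[OF A] by simp
        hence "mat 1 1 (\<lambda>_. (\<rho> g $$ (0,0))^m) $$ (0,0) = (1\<^sub>m 1 :: complex mat) $$ (0,0)" by simp
        hence "(\<rho> g $$ (0,0))^m = 1" by simp
        hence "cmod (\<rho> g $$ (0,0)) = 1" using power_eq_1_iff m by blast
        moreover have "mat_trace (\<rho> g) = \<rho> g $$ (0,0)" unfolding mat_trace_def using A by simp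
        ultimately show ?thesis using n by simp
      qed
      thus ?thesis unfolding cc by auto
    qed
    thus "commutator_subgroup G (char_center G \<chi>) (carrier G) = derived G (carrier G)" using comm_all by simp
  next
    assume eq: "commutator_subgroup G (char_center G \<chi>) (carrier G) = derived G (carrier G)"
    have scal: "\<exists>c. \<rho> z = c \<cdot>\<^sub>m 1\<^sub>m n" if z: "z \<in> char_center G \<chi>" for z
    proof -
      have zc: "z \<in> carrier G" and tr: "cmod (mat_trace (\<rho> z)) = real n" using z unfolding cc by auto
      obtain m :: nat where m: "m > 0" "z [^]\<^bsub>G\<^esub> m = \<one>\<^bsub>G\<^esub>" using finite_group_pow_one[OF G fin zc] by auto
      have "\<rho> z ^\<^sub>m m = 1\<^sub>m n" using rep_pow[OF G rep zc, of m] m r1 by simp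
      from scalar_of_finite_order[OF car[OF zc] m(1) this tr] show ?thesis .
    qed
    have gen: "\<rho> (z \<otimes>\<^bsub>G\<^esub> g \<otimes>\<^bsub>G\<^esub> inv\<^bsub>G\<^esub> z \<otimes>\<^bsub>G\<^esub> inv\<^bsub>G\<^esub> g) = 1\<^sub>m n"
      if z: "z \<in> char_center G \<chi>" and g: "g \<in> carrier G" for z g
    proof -
      have zc: "z \<in> carrier G" using z unfolding cc by auto
      obtain c where c: "\<rho> z = c \<cdot>\<^sub>m 1\<^sub>m n" using scal[OF z] by auto
      have "\<rho> (z \<otimes>\<^bsub>G\<^esub> g) = \<rho> (g \<otimes>\<^bsub>G\<^esub> z)"
      proof -
        have "\<rho> (z \<otimes>\<^bsub>G\<^esub> g) = \<rho> z * \<rho> g" using rm zc g by simp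
        also have "\<dots> = c \<cdot>\<^sub>m (1\<^sub>m n * \<rho> g)" unfolding c using car[OF g] by (intro mult_smult_assoc_mat) auto
        also have "\<dots> = c \<cdot>\<^sub>m (\<rho> g * 1\<^sub>m n)" using car[OF g] by (simp add: left_mult_one_mat right_mult_one_mat)
        also have "\<dots> = \<rho> g * \<rho> z" unfolding c using car[OF g] by (intro mult_smult_distrib[symmetric]) auto
        also have "\<dots> = \<rho> (g \<otimes>\<^bsub>G\<^esub> z)" using rm zc g by simp
        finally show ?thesis .
      qed
      hence "\<rho> ((z \<otimes>\<^bsub>G\<^esub> g) \<otimes>\<^bsub>G\<^esub> inv\<^bsub>G\<^esub> (g \<otimes>\<^bsub>G\<^esub> z)) = 1\<^sub>m n"
        by (intro rep_eq_imp[OF G rep]) (use zc g in auto)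
      moreover have "(z \<otimes>\<^bsub>G\<^esub> g) \<otimes>\<^bsub>G\<^esub> inv\<^bsub>G\<^esub> (g \<otimes>\<^bsub>G\<^esub> z) = z \<otimes>\<^bsub>G\<^esub> g \<otimes>\<^bsub>G\<^esub> inv\<^bsub>G\<^esub> z \<otimes>\<^bsub>G\<^esub> inv\<^bsub>G\<^esub> g"
        using zc g by (simp add: inv_mult_group m_assoc)
      ultimately show ?thesis by simp
    qed
    have allone: "x \<in> carrier G \<and> \<rho> x = 1\<^sub>m n"
      if x: "x \<in> commutator_subgroup G (char_center G \<chi>) (carrier G)" for x
      using x unfolding commutator_subgroup_def
    proof (induction rule: generate.induct)
      case one
      then show ?case using r1 by simp
    next
      case (incl h)
      then obtain z g where h: "h = z \<otimes>\<^bsub>G\<^esub> g \<otimes>\<^bsub>G\<^esub> inv\<^bsub>G\<^esub> z \<otimes>\<^bsub>G\<^esub> inv\<^bsub>G\<^esub> g"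
        and z: "z \<in> char_center G \<chi>" and g: "g \<in> carrier G" by auto
      have zc: "z \<in> carrier G" using z unfolding cc by auto
      show ?case using gen[OF z g] h zc g by simp
    next
      case (inv h)
      then obtain z g where h: "h = z \<otimes>\<^bsub>G\<^esub> g \<otimes>\<^bsub>G\<^esub> inv\<^bsub>G\<^esub> z \<otimes>\<^bsub>G\<^esub> inv\<^bsub>G\<^esub> g"
        and z: "z \<in> char_center G \<chi>" and g: "g \<in> carrier G" by auto
      have zc: "z \<in> carrier G" using z unfolding cc by auto
      have hc: "h \<in> carrier G" and rh: "\<rho> h = 1\<^sub>m n" using gen[OF z g] h zc g by auto
      have ihc: "inv\<^bsub>G\<^esub> h \<in> carrier G" using hc by simp
      have "\<rho> (inv\<^bsub>G\<^esub> h) = \<rho> (inv\<^bsub>G\<^esub> h) * \<rho> h" using rh car[OF ihc] by (simp add: right_mult_one_mat)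
      also have "\<dots> = \<rho> (inv\<^bsub>G\<^esub> h \<otimes>\<^bsub>G\<^esub> h)" using rm[OF ihc hc] by simp
      also have "\<dots> = 1\<^sub>m n" using hc r1 by simp
      finally show ?case using ihc by simp
    next
      case (eng h1 h2)
      then show ?case using rm[of h1 h2] by simp
    qed
    have commute: "\<rho> g * \<rho> h = \<rho> h * \<rho> g" if g: "g \<in> carrier G" and h: "h \<in> carrier G" for g h
    proof -
      have "g \<otimes>\<^bsub>G\<^esub> h \<otimes>\<^bsub>G\<^esub> inv\<^bsub>G\<^esub> g \<otimes>\<^bsub>G\<^esub> inv\<^bsub>G\<^esub> h \<in> derived G (carrier G)"
        unfolding derived_def using g h by (intro generate.incl) blast
      hence "g \<otimes>\<^bsub>G\<^esub> h \<otimes>\<^bsub>G\<^esub> inv\<^bsub>G\<^esub> g \<otimes>\<^bsub>G\<^esub> inv\<^bsub>G\<^esub> h \<in> commutator_subgroup G (char_center G \<chi>) (carrier G)"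
        using eq by simp
      from allone[OF this]
      have "\<rho> (g \<otimes>\<^bsub>G\<^esub> h \<otimes>\<^bsub>G\<^esub> inv\<^bsub>G\<^esub> g \<otimes>\<^bsub>G\<^esub> inv\<^bsub>G\<^esub> h) = 1\<^sub>m n" by simp
      moreover have "g \<otimes>\<^bsub>G\<^esub> h \<otimes>\<^bsub>G\<^esub> inv\<^bsub>G\<^esub> g \<otimes>\<^bsub>G\<^esub> inv\<^bsub>G\<^esub> h = (g \<otimes>\<^bsub>G\<^esub> h) \<otimes>\<^bsub>G\<^esub> inv\<^bsub>G\<^esub> (h \<otimes>\<^bsub>G\<^esub> g)"
        using g h by (simp add: inv_mult_group m_assoc)
      ultimately have "\<rho> (g \<otimes>\<^bsub>G\<^esub> h) = \<rho> (h \<otimes>\<^bsub>G\<^esub> g)"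
        by (intro rep_one_imp[OF G rep]) (use g h in auto)
      thus ?thesis using rm g h by simp
    qed
    have "n = 1" by (rule commuting_irrep_dim1[OF irr commute])
    thus "\<chi> \<one>\<^bsub>G\<^esub> = 1" using chi1 by simp
  qed
qed

end
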